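(* Let $Z$ and $V$ be real Banach spaces, where the norm of $Z$ is Fréchet differentiable away from zero. Let $D \subset Z$ be open, $r \in Z$, and let $F: D \to V$ be semismooth at $z \in D$, $z \neq r$, with Newton derivative $H_F$. Let $p \ge 1$ and $\sigma \ge 0$, and define $$M(z;r) = \left(\frac{1}{\|z-r\|_Z^p} + \sigma\right)\mathcal{I}_V,$$ where $\mathcal{I}_V$ is the identity on $V$. Then $G(z) = M(z;r)F(z)$ is also semismooth at $z$, with Newton derivative acting by $$H_G(z)h = \left(\sigma + \frac{1}{\|z-r\|_Z^p}\right)H_F(z)h - p\,\frac{\langle z^*, h\rangle_{Z^*,Z}}{\|z-r\|_Z^{p+1}}\,F(z),$$ where $z^* \in Z^*$ is the derivative of the norm $\|\cdot\|_Z$ at $z - r$, i.e.\ satisfies $\|z^*\|_{Z^*} \le 1$ and $\langle z^*, z-r\rangle_{Z^*,Z} = \|z-r\|_Z$.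
   Context: Semismoothness: $F: D \subset Z \to V$ ($D$ open) is semismooth at $z \in D$ if it is locally Lipschitz continuous at $z$ and there exist an open neighbourhood $N \subset D$ containing $z$ and a mapping $H: D \to L(Z,V)$ (a Newton derivative) such that $F(w+h) - F(w) - H(w+h)h = o(\|h\|_Z)$ as $h \to 0$, for all $w \in N$. The paper assumes throughout that the norm on $Z$ is Fréchet differentiable away from zero. *)

theory Defs
  imports "HOL-Analysis.Analysis"
begin

definition locally_lipschitz_at :: "'a::real_normed_vector set \<Rightarrow> ('a \<Rightarrow> 'b::real_normed_vector) \<Rightarrow> 'a \<Rightarrow> bool" where
  "locally_lipschitz_at D F z \<longleftrightarrow>
     (\<exists>U L. open U \<and> z \<in> U \<and> U \<subseteq> D \<and>
        (\<forall>x\<in>U. \<forall>y\<in>U. norm (F x - F y) \<le> L * norm (x - y)))"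

definition semismooth_with :: "'a::real_normed_vector set \<Rightarrow> ('a \<Rightarrow> 'b::real_normed_vector) \<Rightarrow> ('a \<Rightarrow> 'a \<Rightarrow> 'b) \<Rightarrow> 'a \<Rightarrow> bool" where
  "semismooth_with D F H z \<longleftrightarrow>
     z \<in> D \<and> locally_lipschitz_at D F z \<and>
     (\<forall>w\<in>D. bounded_linear (H w)) \<and>
     (\<exists>N. open N \<and> z \<in> N \<and> N \<subseteq> D \<and>
        (\<forall>w\<in>N. ((\<lambda>h. norm (F (w + h) - F w - H (w + h) h) / norm h) \<longlongrightarrow> 0) (at 0)))"

end

theory Submission
  imports Defs
begin


lemma norm_subgrad:
  fixes x v :: "'a::real_normed_vector"
  assumes d: "(norm has_derivative N) (at x)"
  shows "N v \<le> norm (x+v) - norm x"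
proof -
  have bl: "bounded_linear N" using d by (rule has_derivative_bounded_linear)
  have "((\<lambda>t::real. x + t *\<^sub>R v) has_derivative (\<lambda>t. t *\<^sub>R v)) (at 0)"
    by (auto intro!: derivative_eq_intros)
  from has_derivative_compose[OF this, of norm N] d
  have "((\<lambda>t::real. norm (x + t *\<^sub>R v)) has_derivative (\<lambda>t. N (t *\<^sub>R v))) (at 0)" by simp
  moreover have "(\<lambda>t. N (t *\<^sub>R v)) = (*) (N v)"
    using bl by (auto simp: linear_simps bounded_linear.linear[OF bl] linear_cmul)
  ultimately have "((\<lambda>t::real. norm (x + t *\<^sub>R v)) has_field_derivative N v) (at 0)"
    by (simp add: has_field_derivative_def)
  hence "((\<lambda>t. (norm (x + t *\<^sub>R v) - norm x) / t) \<longlongrightarrow> N v) (at 0)"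
    by (simp add: has_field_derivative_iff)
  hence lim: "((\<lambda>t. (norm (x + t *\<^sub>R v) - norm x) / t) \<longlongrightarrow> N v) (at_right 0)"
    by (rule filterlim_mono) (auto simp: at_le)
  have ev: "eventually (\<lambda>t. (norm (x + t *\<^sub>R v) - norm x) / t \<le> norm (x+v) - norm x) (at_right (0::real))"
    unfolding eventually_at_right_field
  proof (intro exI[of _ 1] conjI allI impI)
    fix t :: real assume t0: "0 < t" and t1: "t < 1"
    have t: "0 < t \<and> t < 1" using t0 t1 by simp
    have "x + t *\<^sub>R v = (1-t) *\<^sub>R x + t *\<^sub>R (x+v)" by (simp add: algebra_simps)
    hence "norm (x + t *\<^sub>R v) \<le> (1-t) * norm x + t * norm (x+v)"
      using t by (metis abs_of_nonneg less_eq_real_def norm_scaleR norm_triangle_ineq diff_ge_0_iff_ge order.trans eq_iff)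
    hence "norm (x + t *\<^sub>R v) - norm x \<le> t * (norm (x+v) - norm x)" by (simp add: algebra_simps)
    thus "(norm (x + t *\<^sub>R v) - norm x) / t \<le> norm (x+v) - norm x"
      using t by (simp add: divide_le_eq mult.commute)
  qed simp
  show ?thesis by (rule tendsto_upperbound[OF lim ev]) simp
qed

lemma aux_abs: "(R::real) \<le> 0 \<Longrightarrow> R \<ge> 2*e1 - e2 \<Longrightarrow> \<bar>R\<bar> \<le> 2*\<bar>e1\<bar> + \<bar>e2\<bar>"
  by linarith

lemma aux_r2: "(N1::real) \<le> B - A \<Longrightarrow> 2 * (A - n - d) - (B - n - 2 * d) \<le> A - n - N1"
  by (simp add: algebra_simps)

lemma norm_remainder:
  fixes y :: "'a::real_normed_vector"
  assumes y: "y \<noteq> 0" and nd: "\<And>x. x \<noteq> 0 \<Longrightarrow> (norm has_derivative Nd x) (at x)"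
  shows "((\<lambda>h. (norm (y+h) - norm y - Nd (y+h) h) / norm h) \<longlongrightarrow> 0) (at 0)"
proof -
  define E where "E h = norm (norm (y+h) - norm y - Nd y h) / norm h" for h
  have dy: "(norm has_derivative Nd y) (at y)" using nd y by simp
  hence blin: "bounded_linear (Nd y)" by (rule has_derivative_bounded_linear)
  from dy have E0: "(E \<longlongrightarrow> 0) (at 0)" unfolding has_derivative_at E_def by simp
  have fl: "filterlim (\<lambda>h::'a. 2 *\<^sub>R h) (at 0) (at 0)"
  proof (rule filterlim_atI)
    show "((\<lambda>h::'a. 2 *\<^sub>R h) \<longlongrightarrow> 0) (at 0)"
      using tendsto_scaleR[OF tendsto_const[of "2::real"] tendsto_ident_at[of "0::'a" UNIV]] by simp
    show "\<forall>\<^sub>F x in at (0::'a). 2 *\<^sub>R x \<noteq> 0" by (simp add: eventually_at_filter)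
  qed
  have E2: "((\<lambda>h. E (2 *\<^sub>R h)) \<longlongrightarrow> 0) (at 0)"
    using filterlim_compose[OF E0 fl] by simp
  have lim: "((\<lambda>h. 2 * E h + 2 * E (2 *\<^sub>R h)) \<longlongrightarrow> 0) (at 0)"
    using tendsto_add[OF tendsto_mult_right_zero[OF E0, of 2] tendsto_mult_right_zero[OF E2, of 2]] by simp
  have "((\<lambda>h. norm h) \<longlongrightarrow> 0) (at (0::'a))"
    using tendsto_norm[OF tendsto_ident_at[of "0::'a" UNIV]] by simp
  hence evn: "eventually (\<lambda>h. norm h < norm y) (at (0::'a))"
    using y by (intro order_tendstoD(2)) auto
  have evh: "eventually (\<lambda>h::'a. h \<noteq> 0) (at 0)" by (simp add: eventually_at_filter)
  show ?thesis
  proof (rule Lim_null_comparison[OF _ lim])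
    show "\<forall>\<^sub>F h in at 0. norm ((norm (y+h) - norm y - Nd (y+h) h) / norm h) \<le> 2 * E h + 2 * E (2 *\<^sub>R h)"
      using evn evh
    proof eventually_elim
      case (elim h)
      have yh: "y + h \<noteq> 0" proof
        assume "y + h = 0" hence "h = - y" by (simp add: add_eq_0_iff)
        thus False using elim(1) by simp
      qed
      have d: "(norm has_derivative Nd (y+h)) (at (y+h))" using nd yh by simp
      have bl: "bounded_linear (Nd (y+h))" using d by (rule has_derivative_bounded_linear)
      have a1: "Nd (y+h) (-h) \<le> norm y - norm (y+h)"
        using norm_subgrad[OF d, of "-h"] by simp
      have a2: "Nd (y+h) h \<le> norm (y + 2 *\<^sub>R h) - norm (y+h)"
        using norm_subgrad[OF d, of "h"] by (simp add: algebra_simps scaleR_2)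
      have m1: "Nd (y+h) (-h) = - Nd (y+h) h" using linear_neg[OF bounded_linear.linear[OF bl]] by simp
      have m2: "Nd y (2 *\<^sub>R h) = 2 * Nd y h" using linear_scale[OF bounded_linear.linear[OF blin]] by simp
      have hp: "norm h > 0" using elim(2) by simp
      have n2: "norm (2 *\<^sub>R h) = 2 * norm h" by simp
      let ?R = "norm (y+h) - norm y - Nd (y+h) h"
      let ?e1 = "norm (y+h) - norm y - Nd y h"
      let ?e2 = "norm (y + 2 *\<^sub>R h) - norm y - Nd y (2 *\<^sub>R h)"
      have r1: "?R \<le> 0" using a1 m1 by linarith
      have r2: "?R \<ge> 2 * ?e1 - ?e2" unfolding m2 using a2 by (rule aux_r2)
      have "\<bar>?R\<bar> \<le> 2 * \<bar>?e1\<bar> + \<bar>?e2\<bar>"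
        using r1 r2 by (rule aux_abs)
      hence "\<bar>?R\<bar> / norm h \<le> (2 * \<bar>?e1\<bar> + \<bar>?e2\<bar>) / norm h"
        using hp by (simp add: divide_right_mono)
      also have "\<dots> = 2 * E h + 2 * E (2 *\<^sub>R h)"
        unfolding E_def n2 using hp by (simp add: field_simps)
      finally show ?case by simp
    qed
  qed
qed

lemma phi_cont:
  fixes b p :: real assumes b: "b > 0"
  shows "isCont (\<lambda>a. if a = b then 0 else (a powr (-p) - b powr (-p))/(a - b) + p * a powr (-p-1)) b"
proof -
  have "((\<lambda>z. z powr (-p)) has_real_derivative (-p) * b powr (-p - 1)) (at b)"
    using has_real_derivative_powr[OF b, of "-p"] by simp
  hence l1: "((\<lambda>a. (a powr (-p) - b powr (-p))/(a - b)) \<longlongrightarrow> (-p) * b powr (-p - 1)) (at b)"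
    by (simp add: has_field_derivative_iff)
  have l2: "((\<lambda>a. p * a powr (-p-1)) \<longlongrightarrow> p * b powr (-p - 1)) (at b)"
    using b by (intro tendsto_intros) auto
  have l3: "((\<lambda>a. (a powr (-p) - b powr (-p))/(a - b) + p * a powr (-p-1)) \<longlongrightarrow> 0) (at b)"
    using tendsto_add[OF l1 l2] by simp
  have "((\<lambda>a. if a = b then 0 else (a powr (-p) - b powr (-p))/(a - b) + p * a powr (-p-1)) \<longlongrightarrow> 0) (at b)"
    by (rule tendsto_cong[THEN iffD1, OF _ l3]) (auto simp: eventually_at_filter)
  thus ?thesis unfolding isCont_def by simp
qed

lemma aux_bound:
  fixes N f a b nh K C R :: real
  assumes "nh > 0" "\<bar>a-b\<bar> \<le> nh" "0 \<le> K" "K \<le> C" "\<bar>N\<bar> \<le> \<bar>f\<bar>*\<bar>a-b\<bar> + K*\<bar>R\<bar>"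
  shows "\<bar>N\<bar>/nh \<le> \<bar>f\<bar> + C*\<bar>R/nh\<bar>"
proof -
  have "\<bar>f\<bar>*\<bar>a-b\<bar> \<le> \<bar>f\<bar>*nh" using assms by (simp add: mult_left_mono)
  moreover have "K*\<bar>R\<bar> \<le> C*\<bar>R\<bar>" using assms by (simp add: mult_right_mono)
  ultimately have "\<bar>N\<bar> \<le> \<bar>f\<bar>*nh + C*\<bar>R\<bar>" using assms by linarith
  hence "\<bar>N\<bar>/nh \<le> (\<bar>f\<bar>*nh + C*\<bar>R\<bar>)/nh" using assms by (simp add: divide_right_mono)
  also have "\<dots> = \<bar>f\<bar> + C*\<bar>R/nh\<bar>" using assms by (simp add: field_simps)
  finally show ?thesis .
qed
lemma aux_phi:
  fixes a b A B K n :: real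
  assumes "a = b \<Longrightarrow> A = B"
  shows "A - B + K*n = (if a = b then 0 else (A - B)/(a-b) + K) * (a - b) - K * (a - b - n)"
  using assms by (cases "a=b") (simp_all add: field_simps)

lemma m_remainder:
  fixes w r :: "'a::real_normed_vector" and p :: real
  assumes wr: "w \<noteq> r" and p: "p \<ge> 0" and nd: "\<And>x. x \<noteq> 0 \<Longrightarrow> (norm has_derivative Nd x) (at x)"
  shows "((\<lambda>h. (1/norm(w+h-r) powr p - 1/norm(w-r) powr p + p * Nd (w+h-r) h / norm (w+h-r) powr (p+1)) / norm h) \<longlongrightarrow> 0) (at 0)"
proof -
  define y where "y = w - r"
  have y: "y \<noteq> 0" using wr unfolding y_def by simp
  define b where "b = norm y"
  have b: "b > 0" using y unfolding b_def by simp
  define \<phi> where "\<phi> = (\<lambda>a. if a = b then 0 else (a powr (-p) - b powr (-p))/(a - b) + p * a powr (-p-1))"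
  define Rf where "Rf h = norm (y+h) - norm y - Nd (y+h) h" for h
  have Rf: "((\<lambda>h. Rf h / norm h) \<longlongrightarrow> 0) (at 0)"
    unfolding Rf_def by (rule norm_remainder[OF y nd])
  have ab: "((\<lambda>h. norm (y+h)) \<longlongrightarrow> b) (at 0)"
    unfolding b_def by (intro tendsto_intros) (auto intro: tendsto_eq_intros)
  have phi0: "((\<lambda>h. \<phi> (norm (y+h))) \<longlongrightarrow> 0) (at 0)"
    using isCont_tendsto_compose[OF phi_cont[OF b, of p] ab] unfolding \<phi>_def by simp
  define C where "C = p * (b/2) powr (-p-1)"
  have lim: "((\<lambda>h. \<bar>\<phi> (norm (y+h))\<bar> + C * \<bar>Rf h / norm h\<bar>) \<longlongrightarrow> 0) (at 0)"
    using tendsto_add[OF tendsto_rabs_zero[OF phi0] tendsto_mult_right_zero[OF tendsto_rabs_zero[OF Rf], of C]]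
    by simp
  have "((\<lambda>h. norm h) \<longlongrightarrow> 0) (at (0::'a))"
    using tendsto_norm[OF tendsto_ident_at[of "0::'a" UNIV]] by simp
  hence evn: "eventually (\<lambda>h. norm h < b/2) (at (0::'a))"
    using b by (intro order_tendstoD(2)) auto
  have evh: "eventually (\<lambda>h::'a. h \<noteq> 0) (at 0)" by (simp add: eventually_at_filter)
  show ?thesis
  proof (rule Lim_null_comparison[OF _ lim])
    show "\<forall>\<^sub>F h in at 0. norm ((1/norm(w+h-r) powr p - 1/norm(w-r) powr p + p * Nd (w+h-r) h / norm (w+h-r) powr (p+1)) / norm h)
       \<le> \<bar>\<phi> (norm (y+h))\<bar> + C * \<bar>Rf h / norm h\<bar>"
      using evn evh
    proof eventually_elim
      case (elim h)
      define a where "a = norm (y+h)"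
      have whr: "w + h - r = y + h" unfolding y_def by (simp add: algebra_simps)
      have ab1: "\<bar>a - b\<bar> \<le> norm h" unfolding a_def b_def
        using norm_triangle_ineq3[of "y+h" y] by simp
      have a2: "a \<ge> b/2" using ab1 elim(1) by linarith
      have apos: "a > 0" using a2 b by linarith
      have hp: "norm h > 0" using elim(2) by simp
      have e1: "1 / a powr p = a powr (-p)" by (simp add: powr_minus_divide)
      have e2: "1 / b powr p = b powr (-p)" by (simp add: powr_minus_divide)
      have e3: "p * Nd (y+h) h / a powr (p+1) = p * a powr (-p-1) * Nd (y+h) h"
      proof -
        have "-p-1 = -(p+1)" by simp
        hence q: "a powr (-p-1) = 1 / a powr (p+1)" by (simp only: powr_minus_divide)
        show ?thesis by (simp add: q)
      qed
      let ?N = "1/norm(w+h-r) powr p - 1/norm(w-r) powr p + p * Nd (w+h-r) h / norm (w+h-r) powr (p+1)"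
      have "?N = a powr (-p) - b powr (-p) + p * a powr (-p-1) * Nd (y+h) h"
        unfolding whr a_def[symmetric] using e1 e2 e3 by (simp add: b_def y_def)
      also have "\<dots> = \<phi> a * (a - b) - (p * a powr (-p-1)) * Rf h"
        unfolding Rf_def \<phi>_def a_def[symmetric] b_def[symmetric]
        by (rule aux_phi) simp
      finally have eqN: "?N = \<phi> a * (a - b) - (p * a powr (-p-1)) * Rf h" .
      have K0: "0 \<le> p * a powr (-p-1)" using p by simp
      have KC: "p * a powr (-p-1) \<le> C" unfolding C_def
        using powr_mono2'[of "-p-1" "b/2" a] p b a2 by (simp add: mult_left_mono)
      have "\<bar>?N\<bar> \<le> \<bar>\<phi> a\<bar> * \<bar>a - b\<bar> + (p * a powr (-p-1)) * \<bar>Rf h\<bar>"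
        unfolding eqN using abs_triangle_ineq4[of "\<phi> a * (a - b)" "p * a powr (-p-1) * Rf h"] K0 p
        by (simp add: abs_mult)
      from aux_bound[OF hp ab1 K0 KC this]
      show ?case unfolding a_def by simp
    qed
  qed
qed


lemma powr_lip_lt:
  fixes d p s t :: real
  assumes d: "d > 0" and p: "p \<ge> 0" and s: "s \<ge> d" and st: "s < t"
  shows "\<bar>s powr (-p) - t powr (-p)\<bar> \<le> p * d powr (-p-1) * \<bar>s - t\<bar>"
proof -
  have "\<exists>z. s < z \<and> z < t \<and> (t powr (-p) - s powr (-p) = (t - s) * ((-p) * z powr (-p - 1)))"
    by (rule MVT2[OF st]) (use s d in \<open>auto intro!: has_real_derivative_powr[of _ "-p", simplified]\<close>)
  then obtain z where z: "s < z" "z < t" and eq: "t powr (-p) - s powr (-p) = (t - s) * ((-p) * z powr (-p - 1))" by blast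
  have "z powr (-p-1) \<le> d powr (-p-1)" using powr_mono2'[of "-p-1" d z] p d s z by simp
  hence k: "p * z powr (-p-1) \<le> p * d powr (-p-1)" using p by (simp add: mult_left_mono)
  have e: "s powr (-p) - t powr (-p) = (t - s) * (p * z powr (-p-1))"
    using eq by (simp add: algebra_simps)
  have "(t - s) * (p * z powr (-p-1)) \<ge> 0" using st p by simp
  hence "\<bar>s powr (-p) - t powr (-p)\<bar> = (t - s) * (p * z powr (-p-1))" using e by simp
  also have "\<dots> \<le> (t - s) * (p * d powr (-p-1))" using k st by (simp add: mult_left_mono)
  finally show ?thesis using st by (simp add: mult.commute)
qed

lemma powr_lip:
  fixes d p s t :: real
  assumes d: "d > 0" and p: "p \<ge> 0" and s: "s \<ge> d" and t: "t \<ge> d"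
  shows "\<bar>1 / s powr p - 1 / t powr p\<bar> \<le> p * d powr (-p-1) * \<bar>s - t\<bar>"
proof -
  have "\<bar>s powr (-p) - t powr (-p)\<bar> \<le> p * d powr (-p-1) * \<bar>s - t\<bar>"
  proof (cases s t rule: linorder_cases)
    case less thus ?thesis using powr_lip_lt[OF d p s] by simp
  next
    case equal thus ?thesis by simp
  next
    case greater thus ?thesis using powr_lip_lt[OF d p t greater] by (simp add: abs_minus_commute)
  qed
  thus ?thesis by (simp add: powr_minus_divide)
qed
lemma aux_ident:
  fixes Fx Fw Hh :: "'b::real_normed_vector"
  shows "mx *\<^sub>R Fx - mw *\<^sub>R Fw - (mx *\<^sub>R Hh - k *\<^sub>R Fx)
     = mx *\<^sub>R (Fx - Fw - Hh) + (mx - mw + k) *\<^sub>R Fw + k *\<^sub>R (Fx - Fw)"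
  by (simp add: algebra_simps)

lemma aux_nb:
  fixes A Fw B :: "'b::real_normed_vector"
  assumes nh: "nh > 0" and mx: "\<bar>mx\<bar> \<le> M" and k: "\<bar>k\<bar> \<le> C2*nh" and B: "norm B \<le> L*nh"
  shows "norm (mx *\<^sub>R A + R *\<^sub>R Fw + k *\<^sub>R B) / nh \<le> M * (norm A / nh) + \<bar>R/nh\<bar> * norm Fw + C2*L*nh"
proof -
  have "norm (mx *\<^sub>R A + R *\<^sub>R Fw + k *\<^sub>R B) \<le> \<bar>mx\<bar> * norm A + \<bar>R\<bar> * norm Fw + \<bar>k\<bar> * norm B"
    using norm_triangle_ineq[of "mx *\<^sub>R A + R *\<^sub>R Fw" "k *\<^sub>R B"] norm_triangle_ineq[of "mx *\<^sub>R A" "R *\<^sub>R Fw"]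
    by simp
  also have "\<dots> \<le> M * norm A + \<bar>R\<bar> * norm Fw + (C2*nh) * (L*nh)"
  proof -
    have "\<bar>mx\<bar> * norm A \<le> M * norm A" using mx by (simp add: mult_right_mono)
    moreover have "\<bar>k\<bar> * norm B \<le> (C2*nh) * (L*nh)"
      using k B by (meson abs_ge_zero mult_mono norm_ge_zero order_trans)
    ultimately show ?thesis by linarith
  qed
  finally have "norm (mx *\<^sub>R A + R *\<^sub>R Fw + k *\<^sub>R B) / nh \<le> (M * norm A + \<bar>R\<bar> * norm Fw + (C2*nh) * (L*nh)) / nh"
    using nh by (simp add: divide_right_mono)
  also have "\<dots> = M * (norm A / nh) + \<bar>R/nh\<bar> * norm Fw + C2*L*nh" using nh by (simp add: field_simps)
  finally show ?thesis .
qed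

lemma k_bound:
  fixes d p n q nh :: real
  assumes d: "d > 0" and p: "p \<ge> 0" and n: "n \<ge> d" and q: "\<bar>q\<bar> \<le> nh"
  shows "\<bar>p * q / n powr (p+1)\<bar> \<le> p * d powr (-p-1) * nh"
proof -
  have "-p-1 = -(p+1)" by simp
  hence e: "n powr (-p-1) = 1 / n powr (p+1)" by (simp only: powr_minus_divide)
  have np: "n > 0" using d n by simp
  have "\<bar>p * q / n powr (p+1)\<bar> = p * \<bar>q\<bar> * n powr (-p-1)" using p np e by (simp add: abs_mult)
  also have "\<dots> \<le> p * nh * d powr (-p-1)"
  proof (rule mult_mono)
    show "p * \<bar>q\<bar> \<le> p * nh" using p q by (simp add: mult_left_mono)
    show "n powr (-p-1) \<le> d powr (-p-1)" using powr_mono2'[of "-p-1" d n] p d n by simp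
    show "0 \<le> p * nh" using p q by simp
    show "0 \<le> n powr (- p - 1)" by simp
  qed
  finally show ?thesis by (simp add: mult_ac)
qed

lemma nd_bound:
  fixes x h :: "'a::real_normed_vector"
  assumes d: "(norm has_derivative N) (at x)"
  shows "\<bar>N h\<bar> \<le> norm h"
proof -
  have bl: "bounded_linear N" using d by (rule has_derivative_bounded_linear)
  have "N h \<le> norm (x+h) - norm x" by (rule norm_subgrad[OF d])
  also have "\<dots> \<le> norm h" using norm_triangle_ineq[of x h] by simp
  finally have 1: "N h \<le> norm h" .
  have "N (-h) \<le> norm (x + -h) - norm x" by (rule norm_subgrad[OF d])
  also have "\<dots> \<le> norm h" using norm_triangle_ineq[of x "-h"] by simp
  finally have 2: "- N h \<le> norm h" using linear_neg[OF bounded_linear.linear[OF bl]] by simp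
  show ?thesis using 1 2 by linarith
qed

theorem mainTheorem2:
  fixes D :: "'a::banach set" and F :: "'a \<Rightarrow> 'b::banach"
    and HF :: "'a \<Rightarrow> 'a \<Rightarrow> 'b" and Nd :: "'a \<Rightarrow> 'a \<Rightarrow> real"
    and z r :: 'a and p \<sigma> :: real
  assumes norm_diff: "\<And>x. x \<noteq> 0 \<Longrightarrow> (norm has_derivative Nd x) (at x)"
    and "open D"
    and "z \<in> D" and "z \<noteq> r"
    and "semismooth_with D F HF z"
    and "p \<ge> 1" and "\<sigma> \<ge> 0"
  shows "semismooth_with D
           (\<lambda>w. (1 / norm (w - r) powr p + \<sigma>) *\<^sub>R F w)
           (\<lambda>w h. if w = r then 0 else
                 (\<sigma> + 1 / norm (w - r) powr p) *\<^sub>R HF w h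
                 - (p * Nd (w - r) h / norm (w - r) powr (p + 1)) *\<^sub>R F w)
           z"
proof -
  have p0: "p \<ge> 0" using assms(6) by simp
  have sig: "\<sigma> \<ge> 0" by (rule assms(7))
  have ss: "locally_lipschitz_at D F z" "\<forall>w\<in>D. bounded_linear (HF w)"
    "\<exists>N. open N \<and> z \<in> N \<and> N \<subseteq> D \<and>
        (\<forall>w\<in>N. ((\<lambda>h. norm (F (w + h) - F w - HF (w + h) h) / norm h) \<longlongrightarrow> 0) (at 0))"
    using assms(5) unfolding semismooth_with_def by blast+
  obtain N where N: "open N" "z \<in> N" "N \<subseteq> D"
    and Nlim: "\<And>w. w \<in> N \<Longrightarrow> ((\<lambda>h. norm (F (w + h) - F w - HF (w + h) h) / norm h) \<longlongrightarrow> 0) (at 0)"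
    using ss(3) by blast
  obtain U L where U: "open U" "z \<in> U" "U \<subseteq> D"
    and Lip: "\<And>x y. x \<in> U \<Longrightarrow> y \<in> U \<Longrightarrow> norm (F x - F y) \<le> L * norm (x - y)"
    using ss(1) unfolding locally_lipschitz_at_def by blast
  define \<delta> where "\<delta> = norm (z - r) / 2"
  have \<delta>: "\<delta> > 0" using assms(4) unfolding \<delta>_def by simp
  define B0 where "B0 = ball z \<delta>"
  have farr: "norm (x - r) \<ge> \<delta>" if "x \<in> B0" for x
  proof -
    have "norm (z - x) < \<delta>" using that unfolding B0_def by (simp add: dist_norm)
    moreover have "norm (z - r) \<le> norm (z - x) + norm (x - r)"
      using norm_triangle_ineq[of "z - x" "x - r"] by simp
    ultimately show ?thesis unfolding \<delta>_def by linarith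
  qed
  have xr: "x \<noteq> r" if "x \<in> B0" for x using farr[OF that] \<delta> by auto
  define m where "m x = 1 / norm (x - r) powr p + \<sigma>" for x
  define M where "M = 1 / \<delta> powr p + \<sigma>"
  have M0: "M \<ge> 0" unfolding M_def using sig by simp
  have mb: "\<bar>m x\<bar> \<le> M" if "x \<in> B0" for x
  proof -
    have "\<delta> powr p \<le> norm (x - r) powr p" using powr_mono2[of p \<delta> "norm (x - r)"] p0 \<delta> farr[OF that] by simp
    hence "1 / norm (x - r) powr p \<le> 1 / \<delta> powr p" using \<delta> by (simp add: frac_le)
    moreover have "m x \<ge> 0" unfolding m_def using sig by simp
    ultimately show ?thesis unfolding m_def M_def by simp
  qed
  define K where "K = p * \<delta> powr (-p-1)"
  have K0: "K \<ge> 0" unfolding K_def using p0 by simp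
  have mlip: "\<bar>m x - m y\<bar> \<le> K * norm (x - y)" if "x \<in> B0" "y \<in> B0" for x y
  proof -
    have "\<bar>m x - m y\<bar> = \<bar>1 / norm (x - r) powr p - 1 / norm (y - r) powr p\<bar>" unfolding m_def by simp
    also have "\<dots> \<le> K * \<bar>norm (x - r) - norm (y - r)\<bar>"
      unfolding K_def by (rule powr_lip[OF \<delta> p0 farr[OF that(1)] farr[OF that(2)]])
    also have "\<dots> \<le> K * norm (x - y)"
      using norm_triangle_ineq3[of "x - r" "y - r"] K0 by (simp add: mult_left_mono)
    finally show ?thesis .
  qed
  define BF where "BF = norm (F z) + \<bar>L\<bar> * \<delta>"
  have Fb: "norm (F x) \<le> BF" if "x \<in> U" "x \<in> B0" for x
  proof -
    have "norm (F x) \<le> norm (F z) + norm (F x - F z)" using norm_triangle_ineq[of "F z" "F x - F z"] by simp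
    moreover have "norm (F x - F z) \<le> L * norm (x - z)" using Lip[OF that(1) U(2)] .
    moreover have "L * norm (x - z) \<le> \<bar>L\<bar> * \<delta>"
    proof -
      have "norm (x - z) < \<delta>" using that(2) unfolding B0_def by (simp add: dist_norm norm_minus_commute)
      hence "\<bar>L\<bar> * norm (x - z) \<le> \<bar>L\<bar> * \<delta>" by (simp add: mult_left_mono)
      moreover have "L * norm (x - z) \<le> \<bar>L\<bar> * norm (x - z)" by (simp add: mult_right_mono)
      ultimately show ?thesis by linarith
    qed
    ultimately show ?thesis unfolding BF_def by linarith
  qed
  have BF0: "BF \<ge> 0" unfolding BF_def using \<delta> by simp
  show ?thesis unfolding semismooth_with_def
  proof (intro conjI)
    show "z \<in> D" by (rule assms(3))
    show "locally_lipschitz_at D (\<lambda>w. (1 / norm (w - r) powr p + \<sigma>) *\<^sub>R F w) z"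
      unfolding locally_lipschitz_at_def
    proof (intro exI[of _ "U \<inter> B0"] exI[of _ "M*L + K*BF"] conjI ballI)
      show "open (U \<inter> B0)" using U(1) unfolding B0_def by auto
      show "z \<in> U \<inter> B0" using U(2) \<delta> unfolding B0_def by auto
      show "U \<inter> B0 \<subseteq> D" using U(3) by auto
      fix x y assume x: "x \<in> U \<inter> B0" and y: "y \<in> U \<inter> B0"
      have eq: "m x *\<^sub>R F x - m y *\<^sub>R F y = m x *\<^sub>R (F x - F y) + (m x - m y) *\<^sub>R F y"
        by (simp add: algebra_simps)
      have "norm (m x *\<^sub>R F x - m y *\<^sub>R F y) \<le> \<bar>m x\<bar> * norm (F x - F y) + \<bar>m x - m y\<bar> * norm (F y)"
        unfolding eq using norm_triangle_ineq[of "m x *\<^sub>R (F x - F y)" "(m x - m y) *\<^sub>R F y"] by simp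
      also have "\<dots> \<le> M * (L * norm (x - y)) + (K * norm (x - y)) * BF"
      proof (rule add_mono)
        show "\<bar>m x\<bar> * norm (F x - F y) \<le> M * (L * norm (x - y))"
          using mb[of x] x Lip[of x y] y M0 by (intro mult_mono) auto
        show "\<bar>m x - m y\<bar> * norm (F y) \<le> (K * norm (x - y)) * BF"
          using mlip[of x y] x y Fb[of y] K0 by (intro mult_mono) auto
      qed
      also have "\<dots> = (M*L + K*BF) * norm (x - y)" by (simp add: algebra_simps)
      finally show "norm ((1 / norm (x - r) powr p + \<sigma>) *\<^sub>R F x - (1 / norm (y - r) powr p + \<sigma>) *\<^sub>R F y)
          \<le> (M*L + K*BF) * norm (x - y)" unfolding m_def .
    qed
    show "\<forall>w\<in>D. bounded_linear (\<lambda>h. if w = r then 0 else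
                 (\<sigma> + 1 / norm (w - r) powr p) *\<^sub>R HF w h
                 - (p * Nd (w - r) h / norm (w - r) powr (p + 1)) *\<^sub>R F w)"
    proof
      fix w assume w: "w \<in> D"
      show "bounded_linear (\<lambda>h. if w = r then 0 else
                 (\<sigma> + 1 / norm (w - r) powr p) *\<^sub>R HF w h
                 - (p * Nd (w - r) h / norm (w - r) powr (p + 1)) *\<^sub>R F w)"
      proof (cases "w = r")
        case True thus ?thesis by (simp add: bounded_linear_zero)
      next
        case False
        have b1: "bounded_linear (HF w)" using ss(2) w by blast
        have b2: "bounded_linear (Nd (w - r))"
          using norm_diff[of "w - r"] False by (simp add: has_derivative_bounded_linear)
        have b3: "bounded_linear (\<lambda>h. (\<sigma> + 1 / norm (w - r) powr p) *\<^sub>R HF w h)"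
          by (rule bounded_linear_compose[OF bounded_linear_scaleR_right b1])
        have b4: "bounded_linear (\<lambda>h. (p * Nd (w - r) h / norm (w - r) powr (p + 1)))"
          using bounded_linear_compose[OF bounded_linear_mult_right[of "p / norm (w - r) powr (p + 1)"] b2]
          by (simp add: field_simps)
        have b5: "bounded_linear (\<lambda>h. (p * Nd (w - r) h / norm (w - r) powr (p + 1)) *\<^sub>R F w)"
          by (rule bounded_linear_compose[OF bounded_linear_scaleR_left b4])
        show ?thesis using bounded_linear_sub[OF b3 b5] False by simp
      qed
    qed
    show "\<exists>N. open N \<and> z \<in> N \<and> N \<subseteq> D \<and>
        (\<forall>w\<in>N. ((\<lambda>h. norm ((1 / norm (w + h - r) powr p + \<sigma>) *\<^sub>R F (w + h) - (1 / norm (w - r) powr p + \<sigma>) *\<^sub>R F w -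
             (if w + h = r then 0 else
                 (\<sigma> + 1 / norm (w + h - r) powr p) *\<^sub>R HF (w + h) h
                 - (p * Nd (w + h - r) h / norm (w + h - r) powr (p + 1)) *\<^sub>R F (w + h))) / norm h) \<longlongrightarrow> 0) (at 0))"
    proof (intro exI[of _ "N \<inter> U \<inter> B0"] conjI ballI)
      show "open (N \<inter> U \<inter> B0)" using U(1) N(1) unfolding B0_def by auto
      show "z \<in> N \<inter> U \<inter> B0" using U(2) N(2) \<delta> unfolding B0_def by auto
      show "N \<inter> U \<inter> B0 \<subseteq> D" using U(3) by auto
      fix w assume w: "w \<in> N \<inter> U \<inter> B0"
      have wr: "w \<noteq> r" using xr w by auto
      define RF where "RF h = F (w + h) - F w - HF (w + h) h" for h
      define Rm where "Rm h = 1/norm(w+h-r) powr p - 1/norm(w-r) powr p + p * Nd (w+h-r) h / norm (w+h-r) powr (p+1)" for h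
      have l1: "((\<lambda>h. norm (RF h) / norm h) \<longlongrightarrow> 0) (at 0)" unfolding RF_def using Nlim w by blast
      have l2: "((\<lambda>h. Rm h / norm h) \<longlongrightarrow> 0) (at 0)" unfolding Rm_def
        by (rule m_remainder[OF wr p0 norm_diff])
      have l3: "((\<lambda>h. norm h) \<longlongrightarrow> 0) (at (0::'a))"
        using tendsto_norm[OF tendsto_ident_at[of "0::'a" UNIV]] by simp
      have lim: "((\<lambda>h. M * (norm (RF h) / norm h) + \<bar>Rm h / norm h\<bar> * norm (F w) + K*L*norm h) \<longlongrightarrow> 0) (at 0)"
        using tendsto_add[OF tendsto_add[OF tendsto_mult_right_zero[OF l1, of M] tendsto_mult_left_zero[OF tendsto_rabs_zero[OF l2], of "norm (F w)"]]
           tendsto_mult_right_zero[OF l3, of "K*L"]] by simp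
      have "((\<lambda>h. w + h) \<longlongrightarrow> w) (at 0)"
        using tendsto_add[OF tendsto_const[of w] tendsto_ident_at[of "0::'a" UNIV]] by simp
      hence ev1: "eventually (\<lambda>h. w + h \<in> N \<inter> U \<inter> B0) (at 0)"
        by (rule topological_tendstoD[OF _ \<open>open (N \<inter> U \<inter> B0)\<close> w])
      have ev2: "eventually (\<lambda>h::'a. h \<noteq> 0) (at 0)" by (simp add: eventually_at_filter)
      show "((\<lambda>h. norm ((1 / norm (w + h - r) powr p + \<sigma>) *\<^sub>R F (w + h) - (1 / norm (w - r) powr p + \<sigma>) *\<^sub>R F w -
             (if w + h = r then 0 else
                 (\<sigma> + 1 / norm (w + h - r) powr p) *\<^sub>R HF (w + h) h
                 - (p * Nd (w + h - r) h / norm (w + h - r) powr (p + 1)) *\<^sub>R F (w + h))) / norm h) \<longlongrightarrow> 0) (at 0)"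
      proof (rule Lim_null_comparison[OF _ lim])
        show "\<forall>\<^sub>F h in at 0. norm (norm ((1 / norm (w + h - r) powr p + \<sigma>) *\<^sub>R F (w + h) - (1 / norm (w - r) powr p + \<sigma>) *\<^sub>R F w -
             (if w + h = r then 0 else
                 (\<sigma> + 1 / norm (w + h - r) powr p) *\<^sub>R HF (w + h) h
                 - (p * Nd (w + h - r) h / norm (w + h - r) powr (p + 1)) *\<^sub>R F (w + h))) / norm h)
          \<le> M * (norm (RF h) / norm h) + \<bar>Rm h / norm h\<bar> * norm (F w) + K*L*norm h"
          using ev1 ev2
        proof eventually_elim
          case (elim h)
          let ?x = "w + h"
          have xB: "?x \<in> B0" "?x \<in> U" using elim(1) by auto
          have xr': "?x \<noteq> r" using xr[OF xB(1)] .
          have hp: "norm h > 0" using elim(2) by simp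
          let ?k = "p * Nd (w + h - r) h / norm (w + h - r) powr (p + 1)"
          have id: "(1 / norm (w + h - r) powr p + \<sigma>) *\<^sub>R F (w + h) - (1 / norm (w - r) powr p + \<sigma>) *\<^sub>R F w -
             (if w + h = r then 0 else
                 (\<sigma> + 1 / norm (w + h - r) powr p) *\<^sub>R HF (w + h) h - ?k *\<^sub>R F (w + h))
             = m ?x *\<^sub>R RF h + Rm h *\<^sub>R F w + ?k *\<^sub>R (F ?x - F w)"
            using aux_ident[of "m ?x" "F ?x" "m w" "F w" "HF ?x h" ?k] xr'
            unfolding m_def RF_def Rm_def by (simp add: add.commute algebra_simps)
          have kb: "\<bar>?k\<bar> \<le> K * norm h" unfolding K_def
            by (rule k_bound[OF \<delta> p0 farr[OF xB(1)] nd_bound[OF norm_diff[of "w + h - r"]]]) (use xr' in simp)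
          have Bb: "norm (F ?x - F w) \<le> L * norm h" using Lip[OF xB(2), of w] w by simp
          have "norm (m ?x *\<^sub>R RF h + Rm h *\<^sub>R F w + ?k *\<^sub>R (F ?x - F w)) / norm h
              \<le> M * (norm (RF h) / norm h) + \<bar>Rm h / norm h\<bar> * norm (F w) + K*L*norm h"
            by (rule aux_nb[OF hp mb[OF xB(1)] kb Bb])
          thus ?case unfolding id by simp
        qed
      qed
    qed
  qed
qed

end
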